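(* Let $n\ge1$ and $k=3$. There exist even functions $V_1,V_2,V_3:\mathbb{R}^n\to\mathbb{R}\cup\{+\infty\}$ such that for each $m\in\{1,2,3\}$ and every $x_m\in\mathbb{R}^n$, $$V_m(x_m)=\sup_{x_i\in\mathbb{R}^n,\ i\ne m}\Bigl(\sum_{1\le i<j\le 3}\langle x_i,x_j\rangle-\sum_{i\ne m}V_i(x_i)\Bigr),$$ and $$\prod_{i=1}^3\int_{\mathbb{R}^n}e^{-V_i(x)}\,dx=0 .$$
   Context: $\langle\cdot,\cdot\rangle$ is the standard inner product on $\mathbb{R}^n$, and $e^{-\infty}=0$. *)

theory Defs
  imports "HOL-Analysis.Analysis"
begin

fun exp_neg_ereal :: "ereal \<Rightarrow> ennreal" where
  "exp_neg_ereal (ereal r) = ennreal (exp (- r))"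
| "exp_neg_ereal PInfty = 0"
| "exp_neg_ereal MInfty = top"

end

theory Submission
  imports Defs
begin

definition VV :: "nat \<Rightarrow> real ^ 'n \<Rightarrow> ereal" where
  "VV i x = (if i = 1 then (if x = 0 then 0 else \<infinity>) else ereal (norm x ^ 2 / 2))"

lemma sum3: "(\<Sum>i\<in>{1,2,3::nat}. \<Sum>j\<in>{1,2,3::nat}. if i < j then f i j else (0::real))
   = f 1 2 + f 1 3 + f 2 3"
  by simp

lemma key: "inner (z::real^'n) w - norm w ^ 2 / 2 \<le> norm z ^ 2 / 2"
proof -
  have "0 \<le> norm (z - w) ^ 2" by simp
  also have "norm (z - w) ^ 2 = norm z ^ 2 - 2 * inner z w + norm w ^ 2"
    by (simp add: power2_norm_eq_inner inner_diff inner_commute)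
  finally show ?thesis by simp
qed

lemma key2: "inner (z::real^'n) w - norm z ^ 2 / 2 - norm w ^ 2 / 2 \<le> 0"
  using key[of z w] by simp

lemma case1_0: "(SUP y \<in> {y :: nat \<Rightarrow> real ^ 'n. y 1 = 0}.
   ereal (\<Sum>i\<in>{1,2,3::nat}. \<Sum>j\<in>{1,2,3::nat}. if i < j then inner (y i) (y j) else 0)
   - (\<Sum>i\<in>{1,2,3} - {1}. VV i (y i))) = 0"
proof (rule antisym)
  show "(SUP y \<in> {y :: nat \<Rightarrow> real ^ 'n. y 1 = 0}.
   ereal (\<Sum>i\<in>{1,2,3::nat}. \<Sum>j\<in>{1,2,3::nat}. if i < j then inner (y i) (y j) else 0)
   - (\<Sum>i\<in>{1,2,3} - {1}. VV i (y i))) \<le> 0"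
  proof (rule SUP_least)
    fix y :: "nat \<Rightarrow> real ^ 'n" assume "y \<in> {y. y 1 = 0}"
    then have y1: "y 1 = 0" by simp
    have e: "{1,2,3::nat} - {1} = {2,3}" by (simp add: insert_Diff_if)
    show "ereal (\<Sum>i\<in>{1,2,3::nat}. \<Sum>j\<in>{1,2,3::nat}. if i < j then inner (y i) (y j) else 0)
   - (\<Sum>i\<in>{1,2,3} - {1}. VV i (y i)) \<le> 0"
      unfolding sum3 e using y1 key2[of "y 2" "y 3"] by (simp add: VV_def)
  qed
next
  let ?y = "\<lambda>i::nat. 0 :: real ^ 'n"
  have e: "{1,2,3::nat} - {1} = {2,3}" by (simp add: insert_Diff_if)
  have val: "ereal (\<Sum>i\<in>{1,2,3::nat}. \<Sum>j\<in>{1,2,3::nat}. if i < j then inner (?y i) (?y j) else 0)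
   - (\<Sum>i\<in>{1,2,3} - {1}. VV i (?y i)) = 0"
    unfolding sum3 e by (simp add: VV_def)
  have mem: "?y \<in> {y :: nat \<Rightarrow> real ^ 'n. y 1 = 0}" by simp
  show "0 \<le> (SUP y \<in> {y :: nat \<Rightarrow> real ^ 'n. y 1 = 0}.
   ereal (\<Sum>i\<in>{1,2,3::nat}. \<Sum>j\<in>{1,2,3::nat}. if i < j then inner (y i) (y j) else 0)
   - (\<Sum>i\<in>{1,2,3} - {1}. VV i (y i)))"
    by (rule SUP_upper2[OF mem], rule eq_refl[OF sym[OF val]])
qed

lemma case1_nz:
  assumes z: "z \<noteq> 0"
  shows "(SUP y \<in> {y :: nat \<Rightarrow> real ^ 'n. y 1 = z}.
   ereal (\<Sum>i\<in>{1,2,3::nat}. \<Sum>j\<in>{1,2,3::nat}. if i < j then inner (y i) (y j) else 0)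
   - (\<Sum>i\<in>{1,2,3} - {1}. VV i (y i))) = \<infinity>"
proof (rule ereal_top)
  fix B :: real
  have zp: "norm z ^ 2 > 0" using z by simp
  define t where "t = \<bar>B\<bar> / (2 * norm z ^ 2)"
  have tB: "2 * t * norm z ^ 2 = \<bar>B\<bar>" using zp unfolding t_def by simp
  let ?y = "\<lambda>i::nat. if i = 1 then z else t *\<^sub>R z"
  have nsq: "norm (t *\<^sub>R z) ^ 2 = t * t * inner z z"
    by (simp only: power2_norm_eq_inner inner_scaleR_left inner_scaleR_right mult.assoc)
  have e: "{1,2,3::nat} - {1} = {2,3}" by (simp add: insert_Diff_if)
  have "ereal (\<Sum>i\<in>{1,2,3::nat}. \<Sum>j\<in>{1,2,3::nat}. if i < j then inner (?y i) (?y j) else 0)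
   - (\<Sum>i\<in>{1,2,3} - {1}. VV i (?y i)) = ereal (2 * t * norm z ^ 2)"
  proof -
    have i1: "inner z (t *\<^sub>R z) = t * inner z z" by simp
    have i2: "inner (t *\<^sub>R z) (t *\<^sub>R z) = t * t * inner z z" by simp
    have zz: "inner z z = norm z ^ 2" by (simp add: power2_norm_eq_inner)
    have "ereal (\<Sum>i\<in>{1,2,3::nat}. \<Sum>j\<in>{1,2,3::nat}. if i < j then inner (?y i) (?y j) else 0)
       - (\<Sum>i\<in>{1,2,3} - {1}. VV i (?y i))
       = ereal (t * inner z z + t * inner z z + t * t * inner z z)
         - (ereal (t * t * inner z z / 2) + ereal (t * t * inner z z / 2))"
      unfolding sum3 e by (simp add: VV_def nsq i1 i2 del: inner_scaleR_left inner_scaleR_right norm_scaleR)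
    also have "\<dots> = ereal (2 * t * norm z ^ 2)" unfolding zz by simp
    finally show ?thesis .
  qed
  also have "\<dots> \<ge> ereal B" using tB by simp
  finally have "ereal B \<le> ereal (\<Sum>i\<in>{1,2,3::nat}. \<Sum>j\<in>{1,2,3::nat}. if i < j then inner (?y i) (?y j) else 0)
   - (\<Sum>i\<in>{1,2,3} - {1}. VV i (?y i))" .
  also have "\<dots> \<le> (SUP y \<in> {y :: nat \<Rightarrow> real ^ 'n. y 1 = z}.
   ereal (\<Sum>i\<in>{1,2,3::nat}. \<Sum>j\<in>{1,2,3::nat}. if i < j then inner (y i) (y j) else 0)
   - (\<Sum>i\<in>{1,2,3} - {1}. VV i (y i)))"
    by (rule SUP_upper) simp
  finally show "ereal B \<le> \<dots>" .
qed

lemma case23: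
  assumes m: "m = 2 \<or> m = 3"
  shows "(SUP y \<in> {y :: nat \<Rightarrow> real ^ 'n. y m = z}.
   ereal (\<Sum>i\<in>{1,2,3::nat}. \<Sum>j\<in>{1,2,3::nat}. if i < j then inner (y i) (y j) else 0)
   - (\<Sum>i\<in>{1,2,3} - {m}. VV i (y i))) = ereal (norm z ^ 2 / 2)"
proof (rule antisym)
  show "(SUP y \<in> {y :: nat \<Rightarrow> real ^ 'n. y m = z}.
   ereal (\<Sum>i\<in>{1,2,3::nat}. \<Sum>j\<in>{1,2,3::nat}. if i < j then inner (y i) (y j) else 0)
   - (\<Sum>i\<in>{1,2,3} - {m}. VV i (y i))) \<le> ereal (norm z ^ 2 / 2)"
  proof (rule SUP_least)
    fix y :: "nat \<Rightarrow> real ^ 'n" assume "y \<in> {y. y m = z}"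
    then have ym: "y m = z" by simp
    show "ereal (\<Sum>i\<in>{1,2,3::nat}. \<Sum>j\<in>{1,2,3::nat}. if i < j then inner (y i) (y j) else 0)
   - (\<Sum>i\<in>{1,2,3} - {m}. VV i (y i)) \<le> ereal (norm z ^ 2 / 2)"
    proof (cases "m = 2")
      case True
      have e: "{1,2,3::nat} - {m} = {1,3}" using True by (simp add: insert_Diff_if)
      show ?thesis
      proof (cases "y 1 = 0")
        case True
        show ?thesis unfolding sum3 e using \<open>y 1 = 0\<close> ym \<open>m = 2\<close> key[of z "y 3"]
          by (simp add: VV_def)
      next
        case False
        have "(\<Sum>i\<in>{1,2,3} - {m}. VV i (y i)) = \<infinity>" unfolding e using False
          by (simp add: VV_def)
        then show ?thesis by simp
      qed
    next
      case False
      then have m3: "m = 3" using m by simp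
      have e: "{1,2,3::nat} - {m} = {1,2}" using m3 by (simp add: insert_Diff_if)
      show ?thesis
      proof (cases "y 1 = 0")
        case True
        show ?thesis unfolding sum3 e using \<open>y 1 = 0\<close> ym m3 key[of z "y 2"]
          by (simp add: VV_def inner_commute)
      next
        case False
        have "(\<Sum>i\<in>{1,2,3} - {m}. VV i (y i)) = \<infinity>" unfolding e using False
          by (simp add: VV_def)
        then show ?thesis by simp
      qed
    qed
  qed
next
  let ?y = "\<lambda>i::nat. if i = 1 then 0 else z"
  have val: "ereal (\<Sum>i\<in>{1,2,3::nat}. \<Sum>j\<in>{1,2,3::nat}. if i < j then inner (?y i) (?y j) else 0)
   - (\<Sum>i\<in>{1,2,3} - {m}. VV i (?y i)) = ereal (norm z ^ 2 / 2)"
  proof (cases "m = 2")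
    case True
    have e: "{1,2,3::nat} - {m} = {1,3}" using True by (simp add: insert_Diff_if)
    show ?thesis unfolding sum3 e by (simp add: VV_def power2_norm_eq_inner)
  next
    case False
    then have m3: "m = 3" using m by simp
    have e: "{1,2,3::nat} - {m} = {1,2}" unfolding m3 by (simp add: insert_Diff_if)
    show ?thesis unfolding sum3 e by (simp add: VV_def power2_norm_eq_inner)
  qed
  have mem: "?y \<in> {y :: nat \<Rightarrow> real ^ 'n. y m = z}" using m by auto
  show "ereal (norm z ^ 2 / 2) \<le> (SUP y \<in> {y :: nat \<Rightarrow> real ^ 'n. y m = z}.
   ereal (\<Sum>i\<in>{1,2,3::nat}. \<Sum>j\<in>{1,2,3::nat}. if i < j then inner (y i) (y j) else 0)
   - (\<Sum>i\<in>{1,2,3} - {m}. VV i (y i)))"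
    by (rule SUP_upper2[OF mem], rule eq_refl[OF sym[OF val]])
qed

lemma exp_inf: "exp_neg_ereal \<infinity> = 0" unfolding infinity_ereal_def by (rule exp_neg_ereal.simps(2))
lemma exp_zero: "exp_neg_ereal 0 = 1" unfolding zero_ereal_def exp_neg_ereal.simps by simp

lemma integral1: "(\<integral>\<^sup>+ x. exp_neg_ereal (VV 1 (x :: real ^ 'n)) \<partial>lebesgue) = 0"
proof -
  have "(\<lambda>x. exp_neg_ereal (VV 1 (x :: real ^ 'n))) = indicator {0}"
    by (rule ext) (simp add: VV_def indicator_def exp_inf exp_zero)
  moreover have N: "{0::real^'n} \<in> null_sets lebesgue"
    by (intro null_sets_completionI countable_imp_null_set_lborel) simp
  ultimately show ?thesis using nn_integral_indicator[OF null_setsD2[OF N]] null_setsD1[OF N] by simp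
qed

theorem mainTheorem2:
  shows "\<exists>V :: nat \<Rightarrow> real ^ 'n \<Rightarrow> ereal.
     (\<forall>i\<in>{1,2,3}. \<forall>x. V i x \<noteq> -\<infinity> \<and> V i (- x) = V i x) \<and>
     (\<forall>m\<in>{1,2,3}. \<forall>z :: real ^ 'n.
        V m z = (SUP y \<in> {y :: nat \<Rightarrow> real ^ 'n. y m = z}.
                   ereal (\<Sum>i\<in>{1,2,3::nat}. \<Sum>j\<in>{1,2,3::nat}. if i < j then inner (y i) (y j) else 0)
                   - (\<Sum>i\<in>{1,2,3} - {m}. V i (y i)))) \<and>
     (\<Prod>i\<in>{1,2,3::nat}. \<integral>\<^sup>+ x. exp_neg_ereal (V i x) \<partial>lebesgue) = 0"
proof (intro exI[of _ VV] conjI ballI allI)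
  fix i :: nat and x :: "real ^ 'n"
  show "VV i x \<noteq> -\<infinity>" by (simp add: VV_def)
  show "VV i (- x) = VV i x" by (simp add: VV_def)
next
  fix m :: nat and z :: "real ^ 'n" assume "m \<in> {1,2,3}"
  then consider "m = 1" | "m = 2 \<or> m = 3" by auto
  then show "VV m z = (SUP y \<in> {y :: nat \<Rightarrow> real ^ 'n. y m = z}.
                   ereal (\<Sum>i\<in>{1,2,3::nat}. \<Sum>j\<in>{1,2,3::nat}. if i < j then inner (y i) (y j) else 0)
                   - (\<Sum>i\<in>{1,2,3} - {m}. VV i (y i)))"
  proof cases
    case 1
    then show ?thesis
    proof (cases "z = 0")
      case True
      have "VV 1 (0::real^'n) = 0" by (simp add: VV_def)
      then show ?thesis by (simp only: 1 True case1_0)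
    next
      case False
      have "VV 1 z = \<infinity>" using False by (simp add: VV_def)
      then show ?thesis by (simp only: 1 case1_nz[OF False])
    qed
  next
    case 2
    then have "m \<noteq> 1" by auto
    then have "VV m z = ereal (norm z ^ 2 / 2)" by (simp add: VV_def)
    then show ?thesis by (simp only: case23[OF 2])
  qed
next
  show "(\<Prod>i\<in>{1,2,3::nat}. \<integral>\<^sup>+ x. exp_neg_ereal (VV i (x :: real ^ 'n)) \<partial>lebesgue) = 0"
    (is "prod ?F _ = 0")
  proof (rule prod_zero)
    have "?F 1 = 0" by (rule integral1)
    then show "\<exists>a\<in>{1,2,3::nat}. ?F a = 0" by blast
  qed simp
qed

end
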